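(* Let $A$ be a locally-complex Cayley--Dickson algebra and let $f(x)=x^n+a_{n-1}x^{n-1}+\dots+a_1x+a_0\in A[x]$ be monic with $n\ge 1$. Then every $r\in\mathrm{sn}(f)$ satisfies $|r|<R_1(f)=\sqrt{1+|a_{n-1}|^2+\dots+|a_1|^2+|a_0|^2}$, $|r|<R_2(f)=1+\max_{0\le k\le n-1}|a_k|$, and $|r|\le R_3(f)=\max\{1,\ |a_{n-1}|+\dots+|a_1|+|a_0|\}$.
   Context: Real Cayley--Dickson algebras: $A_0=\mathbb{R}$ with identity involution, $A_{k+1}=A_k\{\gamma_k\}=A_k\times A_k$ with product $(a,b)(c,d)=(ac+\gamma_k\bar d b,\ da+b\bar c)$ and involution $\overline{(a,b)}=(\bar a,-b)$. A real unital algebra is locally-complex if every non-real element generates a subalgebra isomorphic to $\mathbb{C}$ (for Cayley--Dickson algebras: all $\gamma_k=-1$ up to isomorphism). Trace $\mathrm{tr}(\lambda)=\lambda+\bar\lambda$, norm $\mathrm{n}(\lambda)=\bar\lambda\lambda$, $|\lambda|=\sqrt{\mathrm{n}(\lambda)}$ (the Euclidean norm); $\langle\cdot,\cdot\rangle$ the associated inner product. For $I$ with trace $0$ and norm $1$, $\mathbb{C}_I=\mathbb{R}+\mathbb{R}I\cong\mathbb{C}$ and $\pi_I$ the orthogonal projection onto it. $A[x]=A\otimes_{\mathbb{R}}\mathbb{R}[x]$ with central $x$; for $f(x)=\sum_k a_kx^k$, $f_I(x)=\sum_k\pi_I(a_k)x^k$. If $f_I$ is non-constant, $K_{\mathbb{C}_I}(f_I)$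 is the convex hull in $\mathbb{C}_I$ of the roots of $f_I$ in $\mathbb{C}_I$; otherwise $K_{\mathbb{C}_I}(f_I)=\mathbb{C}_I$. The Gauss--Lucas snail is $\mathrm{sn}(f)=\bigcup_I K_{\mathbb{C}_I}(f_I)$ over all $I$ with $\mathrm{tr}(I)=0$, $\mathrm{n}(I)=1$. *)

theory Defs
  imports "HOL-Analysis.Analysis" "HOL-Library.Function_Algebras"
begin

instantiation "fun" :: (type, real_vector) real_vector
begin
definition scaleR_fun :: "real \<Rightarrow> ('a \<Rightarrow> 'b) \<Rightarrow> 'a \<Rightarrow> 'b"
  where "scaleR_fun r f = (\<lambda>x. r *\<^sub>R f x)"
instance
  by standard (simp_all add: scaleR_fun_def fun_eq_iff scaleR_add_right scaleR_add_left)
end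

text \<open>An element of A_m is represented by its coordinate function nat => real,
  vanishing at indices >= 2^m. A_(k+1) = A_k x A_k: the first half of the
  coordinates (indices < 2^k) is the first component, the second half the second.\<close>

definition cd_lo :: "nat \<Rightarrow> (nat \<Rightarrow> real) \<Rightarrow> (nat \<Rightarrow> real)" where
  "cd_lo k x = (\<lambda>i. if i < 2^k then x i else 0)"

definition cd_hi :: "nat \<Rightarrow> (nat \<Rightarrow> real) \<Rightarrow> (nat \<Rightarrow> real)" where
  "cd_hi k x = (\<lambda>i. if i < 2^k then x (i + 2^k) else 0)"

definition cd_join :: "nat \<Rightarrow> (nat \<Rightarrow> real) \<Rightarrow> (nat \<Rightarrow> real) \<Rightarrow> (nat \<Rightarrow> real)" where
  "cd_join k x y = (\<lambda>i. if i < 2^k then x i else if i < 2 * 2^k then y (i - 2^k) else 0)"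

definition cd_space :: "nat \<Rightarrow> (nat \<Rightarrow> real) set" where
  "cd_space m = {x. \<forall>i. 2^m \<le> i \<longrightarrow> x i = 0}"

definition cd_one :: "nat \<Rightarrow> real" where
  "cd_one = (\<lambda>i. if i = 0 then 1 else 0)"

fun cd_conj :: "nat \<Rightarrow> (nat \<Rightarrow> real) \<Rightarrow> (nat \<Rightarrow> real)" where
  "cd_conj 0 x = (\<lambda>i. if i = 0 then x 0 else 0)"
| "cd_conj (Suc k) x = cd_join k (cd_conj k (cd_lo k x)) (- cd_hi k x)"

text \<open>Product: (a,b)(c,d) = (ac + gamma conj(d) b, da + b conj(c)) with gamma = -1.\<close>
fun cd_mult :: "nat \<Rightarrow> (nat \<Rightarrow> real) \<Rightarrow> (nat \<Rightarrow> real) \<Rightarrow> (nat \<Rightarrow> real)" where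
  "cd_mult 0 x y = (\<lambda>i. if i = 0 then x 0 * y 0 else 0)"
| "cd_mult (Suc k) x y =
     (let a = cd_lo k x; b = cd_hi k x; c = cd_lo k y; d = cd_hi k y
      in cd_join k (cd_mult k a c + (-1::real) *\<^sub>R cd_mult k (cd_conj k d) b)
                   (cd_mult k d a + cd_mult k b (cd_conj k c)))"

text \<open>Trace tr(x) = x + conj x and norm n(x) = conj(x) x (elements of A, real multiples of 1).\<close>
definition cd_tr :: "nat \<Rightarrow> (nat \<Rightarrow> real) \<Rightarrow> (nat \<Rightarrow> real)" where
  "cd_tr m x = x + cd_conj m x"

definition cd_n :: "nat \<Rightarrow> (nat \<Rightarrow> real) \<Rightarrow> (nat \<Rightarrow> real)" where
  "cd_n m x = cd_mult m (cd_conj m x) x"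

text \<open>|x| = sqrt(n(x)), n(x) identified with the real number it is a multiple of 1 by.\<close>
definition cd_abs :: "nat \<Rightarrow> (nat \<Rightarrow> real) \<Rightarrow> real" where
  "cd_abs m x = sqrt (cd_n m x 0)"

definition cd_inner :: "nat \<Rightarrow> (nat \<Rightarrow> real) \<Rightarrow> (nat \<Rightarrow> real) \<Rightarrow> real" where
  "cd_inner m x y = (cd_n m (x + y) 0 - cd_n m x 0 - cd_n m y 0) / 2"

definition cd_pow :: "nat \<Rightarrow> (nat \<Rightarrow> real) \<Rightarrow> nat \<Rightarrow> (nat \<Rightarrow> real)" where
  "cd_pow m r k = ((\<lambda>y. cd_mult m y r) ^^ k) cd_one"

definition cd_unit :: "nat \<Rightarrow> (nat \<Rightarrow> real) \<Rightarrow> bool" where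
  "cd_unit m I \<longleftrightarrow> I \<in> cd_space m \<and> cd_tr m I = 0 \<and> cd_n m I = cd_one"

definition cd_CI :: "(nat \<Rightarrow> real) \<Rightarrow> (nat \<Rightarrow> real) set" where
  "cd_CI I = {u *\<^sub>R cd_one + v *\<^sub>R I | u v. True}"

text \<open>Orthogonal projection onto C_I (1 and I form an orthonormal basis of C_I).\<close>
definition cd_proj :: "nat \<Rightarrow> (nat \<Rightarrow> real) \<Rightarrow> (nat \<Rightarrow> real) \<Rightarrow> (nat \<Rightarrow> real)" where
  "cd_proj m I x = cd_inner m x cd_one *\<^sub>R cd_one + cd_inner m x I *\<^sub>R I"

definition cd_fI :: "nat \<Rightarrow> (nat \<Rightarrow> nat \<Rightarrow> real) \<Rightarrow> nat \<Rightarrow> (nat \<Rightarrow> real) \<Rightarrow> (nat \<Rightarrow> real) \<Rightarrow> (nat \<Rightarrow> real)" where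
  "cd_fI m a n I r = (\<Sum>k\<le>n. cd_mult m (cd_proj m I (a k)) (cd_pow m r k))"

definition cd_K :: "nat \<Rightarrow> (nat \<Rightarrow> nat \<Rightarrow> real) \<Rightarrow> nat \<Rightarrow> (nat \<Rightarrow> real) \<Rightarrow> (nat \<Rightarrow> real) set" where
  "cd_K m a n I =
     (if \<exists>k\<in>{1..n}. cd_proj m I (a k) \<noteq> 0
      then convex hull {r \<in> cd_CI I. cd_fI m a n I r = 0}
      else cd_CI I)"

definition cd_snail :: "nat \<Rightarrow> (nat \<Rightarrow> nat \<Rightarrow> real) \<Rightarrow> nat \<Rightarrow> (nat \<Rightarrow> real) set" where
  "cd_snail m a n = (\<Union>I \<in> {I. cd_unit m I}. cd_K m a n I)"

end

theory Submission
  imports Defs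
begin


lemma space_iff: "x \<in> cd_space m \<longleftrightarrow> (\<forall>i. 2^m \<le> i \<longrightarrow> x i = 0)"
  by (simp add: cd_space_def)

lemma lo_space[simp]: "cd_lo k x \<in> cd_space k"
  by (simp add: cd_space_def cd_lo_def)
lemma hi_space[simp]: "cd_hi k x \<in> cd_space k"
  by (simp add: cd_space_def cd_hi_def)
lemma join_space[simp]: "cd_join k x y \<in> cd_space (Suc k)"
  by (simp add: cd_space_def cd_join_def)

lemma lo_join[simp]: "x \<in> cd_space k \<Longrightarrow> cd_lo k (cd_join k x y) = x"
  by (auto simp: cd_space_def cd_lo_def cd_join_def fun_eq_iff)
lemma hi_join[simp]: "y \<in> cd_space k \<Longrightarrow> cd_hi k (cd_join k x y) = y"
  by (auto simp: cd_space_def cd_hi_def cd_join_def fun_eq_iff)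
lemma join_lo_hi: "x \<in> cd_space (Suc k) \<Longrightarrow> cd_join k (cd_lo k x) (cd_hi k x) = x"
  by (auto simp: cd_space_def cd_hi_def cd_lo_def cd_join_def fun_eq_iff)

lemma lo_add[simp]: "cd_lo k (x + y) = cd_lo k x + cd_lo k y"
  by (auto simp: cd_lo_def fun_eq_iff)
lemma hi_add[simp]: "cd_hi k (x + y) = cd_hi k x + cd_hi k y"
  by (auto simp: cd_hi_def fun_eq_iff)
lemma join_add[simp]: "cd_join k (x + y) (z + w) = cd_join k x z + cd_join k y w"
  by (auto simp: cd_join_def fun_eq_iff)
lemma lo_scale[simp]: "cd_lo k (c *\<^sub>R x) = c *\<^sub>R cd_lo k x"
  by (auto simp: cd_lo_def fun_eq_iff scaleR_fun_def)
lemma hi_scale[simp]: "cd_hi k (c *\<^sub>R x) = c *\<^sub>R cd_hi k x"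
  by (auto simp: cd_hi_def fun_eq_iff scaleR_fun_def)
lemma join_scale[simp]: "cd_join k (c *\<^sub>R x) (c *\<^sub>R y) = c *\<^sub>R cd_join k x y"
  by (auto simp: cd_join_def fun_eq_iff scaleR_fun_def)
lemma join_neg: "cd_join k (- x) (- y) = - cd_join k x y"
  by (auto simp: cd_join_def fun_eq_iff)

lemma conj_space[simp]: "cd_conj k x \<in> cd_space k"
  by (cases k) (auto simp: cd_space_def cd_join_def)
lemma mult_space[simp]: "cd_mult k x y \<in> cd_space k"
  by (cases k) (auto simp: cd_space_def cd_join_def Let_def)
lemma neg_space[simp]: "x \<in> cd_space k \<Longrightarrow> - x \<in> cd_space k"
  by (simp add: cd_space_def)

lemma conj_lin: "\<forall>x y c. cd_conj k (x + y) = cd_conj k x + cd_conj k y \<and> cd_conj k (c *\<^sub>R x) = c *\<^sub>R cd_conj k x"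
proof (induction k)
  case 0 then show ?case by (auto simp: fun_eq_iff scaleR_fun_def)
next
  case (Suc k)
  show ?case
  proof (intro allI conjI)
    fix x y :: "nat \<Rightarrow> real" and c :: real
    have a1: "\<And>x y. cd_conj k (x + y) = cd_conj k x + cd_conj k y" using Suc.IH by blast
    have a2: "\<And>x c. cd_conj k (c *\<^sub>R x) = c *\<^sub>R cd_conj k x" using Suc.IH by blast
    show "cd_conj (Suc k) (x + y) = cd_conj (Suc k) x + cd_conj (Suc k) y"
      by (simp add: a1 join_add[symmetric] minus_add_distrib)
    show "cd_conj (Suc k) (c *\<^sub>R x) = c *\<^sub>R cd_conj (Suc k) x"
      by (simp add: a2 join_scale[symmetric])
  qed
qed

lemma conj_add[simp]: "cd_conj k (x + y) = cd_conj k x + cd_conj k y"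
  using conj_lin by blast
lemma conj_scale[simp]: "cd_conj k (c *\<^sub>R x) = c *\<^sub>R cd_conj k x"
  using conj_lin by blast
lemma conj_neg[simp]: "cd_conj k (- x) = - cd_conj k x"
  using conj_scale[of k "-1" x] by simp
lemma conj_zero[simp]: "cd_conj k 0 = 0"
  using conj_scale[of k 0 x] by simp

lemma mult_lin: "\<forall>x y z c. cd_mult k (x + y) z = cd_mult k x z + cd_mult k y z
   \<and> cd_mult k z (x + y) = cd_mult k z x + cd_mult k z y
   \<and> cd_mult k (c *\<^sub>R x) z = c *\<^sub>R cd_mult k x z
   \<and> cd_mult k z (c *\<^sub>R x) = c *\<^sub>R cd_mult k z x"
proof (induction k)
  case 0 then show ?case by (auto simp: fun_eq_iff scaleR_fun_def algebra_simps)
next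
  case (Suc k)
  show ?case
  proof (intro allI conjI)
    fix x y z :: "nat \<Rightarrow> real" and c :: real
    have a1: "\<And>x y z. cd_mult k (x + y) z = cd_mult k x z + cd_mult k y z" using Suc.IH by blast
    have a2: "\<And>x y z. cd_mult k z (x + y) = cd_mult k z x + cd_mult k z y" using Suc.IH by blast
    have a3: "\<And>x z c. cd_mult k (c *\<^sub>R x) z = c *\<^sub>R cd_mult k x z" using Suc.IH by blast
    have a4: "\<And>x z c. cd_mult k z (c *\<^sub>R x) = c *\<^sub>R cd_mult k z x" using Suc.IH by blast
    show "cd_mult (Suc k) (x + y) z = cd_mult (Suc k) x z + cd_mult (Suc k) y z"
      by (simp add: a1 a2 a3 a4 Let_def join_add[symmetric] algebra_simps)
    show "cd_mult (Suc k) z (x + y) = cd_mult (Suc k) z x + cd_mult (Suc k) z y"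
      by (simp add: a1 a2 a3 a4 Let_def join_add[symmetric] algebra_simps)
    show "cd_mult (Suc k) (c *\<^sub>R x) z = c *\<^sub>R cd_mult (Suc k) x z"
      by (simp add: a1 a2 a3 a4 Let_def join_scale[symmetric] algebra_simps)
    show "cd_mult (Suc k) z (c *\<^sub>R x) = c *\<^sub>R cd_mult (Suc k) z x"
      by (simp add: a1 a2 a3 a4 Let_def join_scale[symmetric] algebra_simps)
  qed
qed

lemma mult_add_left[simp]: "cd_mult k (x + y) z = cd_mult k x z + cd_mult k y z"
  using mult_lin by blast
lemma mult_add_right[simp]: "cd_mult k z (x + y) = cd_mult k z x + cd_mult k z y"
  using mult_lin by blast
lemma mult_scale_left[simp]: "cd_mult k (c *\<^sub>R x) z = c *\<^sub>R cd_mult k x z"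
  using mult_lin by blast
lemma mult_scale_right[simp]: "cd_mult k z (c *\<^sub>R x) = c *\<^sub>R cd_mult k z x"
  using mult_lin by blast

lemma mult_neg_left[simp]: "cd_mult k (- x) z = - cd_mult k x z"
  using mult_scale_left[of k "-1" x z] by simp
lemma mult_neg_right[simp]: "cd_mult k z (- x) = - cd_mult k z x"
  using mult_scale_right[of k z "-1" x] by simp
lemma mult_zero_left[simp]: "cd_mult k 0 z = 0"
  using mult_scale_left[of k 0 x z] by simp
lemma mult_zero_right[simp]: "cd_mult k z 0 = 0"
  using mult_scale_right[of k z 0 x] by simp

lemma one_space[simp]: "cd_one \<in> cd_space k"
  by (simp add: cd_space_def cd_one_def)
lemma lo_one[simp]: "cd_lo k cd_one = cd_one"
  by (auto simp: cd_lo_def cd_one_def fun_eq_iff)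
lemma hi_one[simp]: "cd_hi k cd_one = 0"
  by (auto simp: cd_hi_def cd_one_def fun_eq_iff)
lemma join_one: "cd_join k cd_one 0 = cd_one"
  by (auto simp: cd_join_def cd_one_def fun_eq_iff)

lemma conj_one[simp]: "cd_conj k cd_one = cd_one"
proof (induction k)
  case 0 then show ?case by (auto simp: cd_one_def fun_eq_iff)
next
  case (Suc k) then show ?case by (simp add: join_one)
qed

lemma mult_one_right: "x \<in> cd_space k \<Longrightarrow> cd_mult k x cd_one = x"
proof (induction k arbitrary: x)
  case 0 then show ?case by (auto simp: cd_one_def fun_eq_iff cd_space_def)
next
  case (Suc k)
  then show ?case by (simp add: Let_def join_lo_hi)
qed

lemma mult_one_left: "x \<in> cd_space k \<Longrightarrow> cd_mult k cd_one x = x"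
proof (induction k arbitrary: x)
  case 0 then show ?case by (auto simp: cd_one_def fun_eq_iff cd_space_def)
next
  case (Suc k)
  then show ?case by (simp add: Let_def join_lo_hi mult_one_right)
qed

lemma conj_0: "cd_conj k x 0 = x 0"
proof (induction k arbitrary: x)
  case 0 then show ?case by simp
next
  case (Suc k) then show ?case by (simp add: cd_join_def cd_lo_def)
qed

lemma sum_split_gen: "(\<Sum>i<M + N. f i) = (\<Sum>i<M. f i) + (\<Sum>i<N. f (i + M::nat))"
  by (induction N) (simp_all add: add.commute add.left_commute)

lemma sum_split2: "(\<Sum>i<2 * N. f i) = (\<Sum>i<N. f i) + (\<Sum>i<N. f (i + N::nat)) "
  using sum_split_gen[of f N N] by (simp add: mult_2)

lemma join_0[simp]: "cd_join k x y 0 = x 0"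
  by (simp add: cd_join_def)

lemma n_sum: "cd_n k x 0 = (\<Sum>i<2^k. (x i)^2)"
proof (induction k arbitrary: x)
  case 0 then show ?case by (simp add: cd_n_def power2_eq_square)
next
  case (Suc k)
  have e: "cd_n (Suc k) x 0 = cd_n k (cd_lo k x) 0 + cd_n k (cd_hi k x) 0"
    by (simp add: cd_n_def Let_def)
  have l: "(\<Sum>i<2^k. (cd_lo k x i)^2) = (\<Sum>i<2^k. (x i)^2)"
    by (rule sum.cong) (auto simp: cd_lo_def)
  have h: "(\<Sum>i<2^k. (cd_hi k x i)^2) = (\<Sum>i<2^k. (x (i + 2^k))^2)"
    by (rule sum.cong) (auto simp: cd_hi_def)
  show ?case unfolding e Suc.IH l h by (simp add: sum_split2)
qed

lemma inner_sum: "cd_inner m x y = (\<Sum>i<2^m. x i * y i)"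
proof -
  have "(\<Sum>i<2^m. (x i + y i)^2) = (\<Sum>i<2^m. (x i)^2) + (\<Sum>i<2^m. (y i)^2) + 2 * (\<Sum>i<2^m. x i * y i)"
    by (simp add: power2_sum sum.distrib sum_distrib_left algebra_simps)
  then show ?thesis by (simp add: cd_inner_def n_sum)
qed

lemma abs_sum: "cd_abs m x = sqrt (\<Sum>i<2^m. (x i)^2)"
  by (simp add: cd_abs_def n_sum)

lemma one0[simp]: "cd_one 0 = 1"
  by (simp add: cd_one_def)

lemma sum_one_l: "(\<Sum>i<2^m. cd_one i * f i) = f 0"
proof -
  have "(\<Sum>i<2^m. cd_one i * f i) = (\<Sum>i<(2::nat)^m. if i = 0 then f 0 else 0)"
    by (rule sum.cong) (auto simp: cd_one_def)
  then show ?thesis by (simp add: sum.delta)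
qed
lemma sum_one_r: "(\<Sum>i<2^m. f i * cd_one i) = f 0"
  using sum_one_l[of f m] by (simp add: mult.commute)

definition phi :: "(nat \<Rightarrow> real) \<Rightarrow> complex \<Rightarrow> (nat \<Rightarrow> real)" where
  "phi I z = Re z *\<^sub>R cd_one + Im z *\<^sub>R I"

locale unitI =
  fixes m :: nat and I :: "nat \<Rightarrow> real"
  assumes unit: "cd_unit m I"
begin

lemma I_space: "I \<in> cd_space m"
  using unit by (simp add: cd_unit_def)

lemma conj_I: "cd_conj m I = - I"
proof -
  have "I + cd_conj m I = 0" using unit by (simp add: cd_unit_def cd_tr_def)
  then show ?thesis using minus_unique by metis
qed

lemma II: "cd_mult m I I = - cd_one"
proof -
  have "cd_mult m (cd_conj m I) I = cd_one" using unit by (simp add: cd_unit_def cd_n_def)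
  then have "- cd_mult m I I = cd_one" by (simp add: conj_I)
  then show ?thesis by (metis minus_minus)
qed

lemma I0: "I 0 = 0"
  using conj_0[of m I] by (simp add: conj_I)

lemma Isq: "(\<Sum>i<2^m. (I i)^2) = 1"
proof -
  have "cd_n m I 0 = 1" using unit by (simp add: cd_unit_def cd_one_def)
  then show ?thesis by (simp add: n_sum)
qed

lemma phi_space: "phi I z \<in> cd_space m"
  using I_space by (simp add: phi_def cd_space_def cd_one_def scaleR_fun_def)

lemma phi_mult: "cd_mult m (phi I z) (phi I w) = phi I (z * w)"
  by (simp add: phi_def mult_one_left mult_one_right I_space II algebra_simps)

lemma phi_one: "phi I 1 = cd_one"
  by (simp add: phi_def)

lemma phi_sum: "phi I (sum f S) = (\<Sum>s\<in>S. phi I (f s))"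
  by (simp add: phi_def Re_sum Im_sum scaleR_sum_left sum.distrib)

lemma phi_inj: "phi I z = 0 \<Longrightarrow> z = 0"
proof -
  assume h: "phi I z = 0"
  then have "phi I z 0 = 0" by simp
  then have r: "Re z = 0" by (simp add: phi_def scaleR_fun_def cd_one_def I0)
  with h have "Im z *\<^sub>R I = 0" by (simp add: phi_def)
  moreover have "I \<noteq> 0" using Isq by auto
  ultimately have "Im z = 0" by simp
  with r show "z = 0" by (simp add: complex_eq_iff)
qed

lemma abs_phi: "cd_abs m (phi I z) = cmod z"
proof -
  have "(\<Sum>i<2^m. (phi I z i)^2) = (Re z)^2 * (\<Sum>i<2^m. cd_one i * cd_one i)
     + 2 * Re z * Im z * (\<Sum>i<2^m. cd_one i * I i) + (Im z)^2 * (\<Sum>i<2^m. (I i)^2)"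
    by (simp add: phi_def scaleR_fun_def power2_sum sum.distrib sum_distrib_left algebra_simps power2_eq_square)
  also have "\<dots> = (Re z)^2 + (Im z)^2"
    by (simp add: sum_one_l Isq I0)
  finally show ?thesis by (simp add: abs_sum cmod_def)
qed

lemma pow_phi: "cd_pow m (phi I z) k = phi I (z ^ k)"
proof (induction k)
  case 0 then show ?case by (simp add: cd_pow_def phi_one)
next
  case (Suc k)
  have "cd_pow m (phi I z) (Suc k) = cd_mult m (cd_pow m (phi I z) k) (phi I z)"
    by (simp add: cd_pow_def)
  then show ?case by (simp add: Suc.IH phi_mult mult.commute)
qed

lemma proj_phi: "cd_proj m I x = phi I (Complex (cd_inner m x cd_one) (cd_inner m x I))"
  by (simp add: cd_proj_def phi_def)

lemma proj_one: "cd_proj m I cd_one = cd_one"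
proof -
  have "cd_inner m cd_one cd_one = 1" by (simp add: inner_sum sum_one_l)
  moreover have "cd_inner m cd_one I = 0" by (simp add: inner_sum sum_one_l I0)
  ultimately show ?thesis by (simp add: cd_proj_def)
qed

lemma bessel: "cmod (Complex (cd_inner m x cd_one) (cd_inner m x I)) \<le> cd_abs m x"
proof -
  define \<alpha> where "\<alpha> = x 0"
  define \<beta> where "\<beta> = (\<Sum>i<2^m. x i * I i)"
  have ia: "cd_inner m x cd_one = \<alpha>" by (simp add: inner_sum sum_one_r \<alpha>_def)
  have ib: "cd_inner m x I = \<beta>" by (simp add: inner_sum \<beta>_def)
  have "0 \<le> (\<Sum>i<2^m. (x i - \<alpha> * cd_one i - \<beta> * I i)^2)"
    by (simp add: sum_nonneg)
  also have "\<dots> = (\<Sum>i<2^m. (x i)^2) - 2 * \<alpha> * (\<Sum>i<2^m. x i * cd_one i)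
      - 2 * \<beta> * (\<Sum>i<2^m. x i * I i) + \<alpha>^2 * (\<Sum>i<2^m. cd_one i * cd_one i)
      + 2 * \<alpha> * \<beta> * (\<Sum>i<2^m. cd_one i * I i) + \<beta>^2 * (\<Sum>i<2^m. (I i)^2)"
    by (simp add: power2_eq_square sum.distrib sum_subtractf sum_distrib_left algebra_simps)
  also have "\<dots> = (\<Sum>i<2^m. (x i)^2) - \<alpha>^2 - \<beta>^2"
    using Isq by (simp add: sum_one_l sum_one_r I0 \<alpha>_def \<beta>_def power2_eq_square)
  finally have "\<alpha>^2 + \<beta>^2 \<le> (\<Sum>i<2^m. (x i)^2)" by simp
  then show ?thesis by (simp add: ia ib complex_norm abs_sum)
qed

end



lemma root_bounds:
  fixes t :: real and A :: "nat \<Rightarrow> real"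
  assumes n: "n \<ge> 1" and t0: "t \<ge> 0" and A0: "\<And>k. A k \<ge> 0"
    and h: "t^n \<le> (\<Sum>k<n. A k * t^k)"
  shows "t < sqrt (1 + (\<Sum>k<n. (A k)^2)) \<and> t < 1 + Max (A ` {..<n}) \<and> t \<le> max 1 (\<Sum>k<n. A k)"
proof -
  define M where "M = Max (A ` {..<n})"
  define S where "S = (\<Sum>k<n. (A k)^2)"
  have AM: "A k \<le> M" if "k < n" for k unfolding M_def using that by (intro Max_ge) auto
  have M0: "M \<ge> 0" using AM[of 0] A0[of 0] n by linarith
  have S0: "S \<ge> 0" unfolding S_def by (simp add: sum_nonneg)
  have AS: "(A k)^2 \<le> S" if "k < n" for k unfolding S_def
    using that by (intro member_le_sum) auto
  show ?thesis
  proof (cases "t \<le> 1")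
    case True
    have "t < sqrt (1 + S) \<and> t < 1 + M"
    proof (cases "t < 1")
      case True
      have "1 \<le> sqrt (1 + S)" using S0 by simp
      then show ?thesis using True M0 by linarith
    next
      case False
      with \<open>t \<le> 1\<close> have t1: "t = 1" by simp
      with h have "1 \<le> (\<Sum>k<n. A k)" by simp
      then have "\<exists>k<n. A k > 0"
      proof (rule contrapos_pp)
        assume "\<not> (\<exists>k<n. A k > 0)"
        then have "\<forall>k\<in>{..<n}. A k = 0" using A0 by (metis lessThan_iff not_less order.antisym)
        then have "(\<Sum>k<n. A k) = 0" by simp
        then show "\<not> 1 \<le> (\<Sum>k<n. A k)" by simp
      qed
      then obtain k where k: "k < n" "A k > 0" by blast
      have "0 < (A k)^2" using k by simp
      then have "0 < S" using AS[OF k(1)] by linarith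
      then have "sqrt 1 < sqrt (1 + S)" by (intro real_sqrt_less_mono) linarith
      then have "1 < sqrt (1 + S)" by simp
      then show ?thesis using t1 AM[OF k(1)] k by linarith
    qed
    moreover have "t \<le> max 1 (\<Sum>k<n. A k)" using True by simp
    ultimately show ?thesis unfolding M_def S_def by blast
  next
    case False
    then have t1: "t > 1" by simp
    have tpos: "t^n > 0" using t1 by simp
    have p3: "t \<le> (\<Sum>k<n. A k)"
    proof -
      have "(\<Sum>k<n. A k * t^k) \<le> (\<Sum>k<n. A k * t^(n-1))"
        by (intro sum_mono mult_left_mono power_increasing) (use t1 A0 in auto)
      also have "\<dots> = (\<Sum>k<n. A k) * t^(n-1)" by (simp add: sum_distrib_right)
      finally have hh: "t^n \<le> (\<Sum>k<n. A k) * t^(n-1)" using h by linarith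
      have "t^n = t * t^(n-1)" using n by (cases n) auto
      with hh have "t * t^(n-1) \<le> (\<Sum>k<n. A k) * t^(n-1)" by simp
      moreover have "t^(n-1) > 0" using t1 by simp
      ultimately show ?thesis by simp
    qed
    have p2: "t < 1 + M"
    proof -
      have "(\<Sum>k<n. A k * t^k) \<le> (\<Sum>k<n. M * t^k)"
        by (intro sum_mono mult_right_mono) (use t1 AM in auto)
      also have "\<dots> = M * (\<Sum>k<n. t^k)" by (simp add: sum_distrib_left)
      also have "(\<Sum>k<n. t^k) = (t^n - 1) / (t - 1)" using t1 by (intro geometric_sum) simp
      finally have "t^n \<le> M * ((t^n - 1) / (t - 1))" using h by linarith
      then have a: "t^n * (t - 1) \<le> M * (t^n - 1)" using t1 by (simp add: field_simps)
      have pos: "0 < t^n * (t - 1)" using tpos t1 by simp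
      have "M \<noteq> 0"
      proof
        assume "M = 0" with a pos show False by simp
      qed
      then have "M > 0" using M0 by simp
      then have "M * (t^n - 1) < M * t^n" by simp
      with a have "t^n * (t - 1) < t^n * M" by (simp add: mult.commute)
      then show ?thesis using tpos by (simp add: mult_less_cancel_left_pos)
    qed
    have p1: "t < sqrt (1 + S)"
    proof -
      have t21: "t^2 > 1" using t1 by (simp add: one_less_power)
      have "(t^n)^2 \<le> (\<Sum>k<n. A k * t^k)^2" using h tpos by (intro power_mono) auto
      also have "\<dots> \<le> S * (\<Sum>k<n. (t^k)^2)" unfolding S_def by (rule Cauchy_Schwarz_ineq_sum)
      also have "(\<Sum>k<n. (t^k)^2) = (\<Sum>k<n. (t^2)^k)" by (simp add: power_mult[symmetric] mult.commute)
      also have "\<dots> = ((t^2)^n - 1) / (t^2 - 1)" using t21 by (intro geometric_sum) simp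
      finally have b: "(t^2)^n \<le> S * (((t^2)^n - 1) / (t^2 - 1))" by (simp add: power_mult[symmetric] mult.commute)
      have a: "(t^2)^n * (t^2 - 1) \<le> S * ((t^2)^n - 1)" using b t21 by (simp add: field_simps)
      have tp2: "(t^2)^n > 0" using t1 by simp
      have pos: "0 < (t^2)^n * (t^2 - 1)" using tp2 t21 by simp
      have "S \<noteq> 0"
      proof
        assume "S = 0" with a pos show False by simp
      qed
      then have "S > 0" using S0 by simp
      then have "S * ((t^2)^n - 1) < S * (t^2)^n" by simp
      with a have "(t^2)^n * (t^2 - 1) < (t^2)^n * S" by (simp add: mult.commute)
      then have "t^2 - 1 < S" using tp2 by (simp add: mult_less_cancel_left_pos)
      then show ?thesis by (intro real_less_rsqrt) simp
    qed
    show ?thesis using p1 p2 p3 unfolding M_def S_def by simp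
  qed
qed



lemma abs_L2: "cd_abs m x = L2_set x {..<2^m}"
  by (simp add: L2_set_def abs_sum)

lemma abs_nonneg: "cd_abs m x \<ge> 0"
  by (simp add: abs_sum sum_nonneg)

lemma abs_convex:
  assumes "0 \<le> u" "0 \<le> v"
  shows "cd_abs m (u *\<^sub>R x + v *\<^sub>R y) \<le> u * cd_abs m x + v * cd_abs m y"
proof -
  have e: "(u *\<^sub>R x + v *\<^sub>R y) = (\<lambda>i. u * x i + v * y i)" by (simp add: fun_eq_iff scaleR_fun_def)
  have "L2_set (\<lambda>i. u * x i + v * y i) {..<2^m} \<le> L2_set (\<lambda>i. u * x i) {..<2^m} + L2_set (\<lambda>i. v * y i) {..<2^m}"
    by (rule L2_set_triangle_ineq)
  also have "\<dots> = u * L2_set x {..<2^m} + v * L2_set y {..<2^m}"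
    using assms by (simp add: L2_set_right_distrib)
  finally show ?thesis by (simp add: e abs_L2)
qed

lemma conv_lt:
  fixes u v a b R :: real
  assumes "0 \<le> u" "0 \<le> v" "u + v = 1" "a < R" "b < R"
  shows "u * a + v * b < R"
proof (cases "u = 0")
  case True then show ?thesis using assms by simp
next
  case False
  then have "u * a < u * R" using assms by simp
  moreover have "v * b \<le> v * R" using assms by (simp add: mult_left_mono)
  ultimately have "u * a + v * b < u * R + v * R" by linarith
  also have "\<dots> = (u + v) * R" by (simp add: distrib_right)
  also have "\<dots> = R" using assms by simp
  finally show ?thesis .
qed

lemma conv_le:
  fixes u v a b R :: real
  assumes "0 \<le> u" "0 \<le> v" "u + v = 1" "a \<le> R" "b \<le> R"
  shows "u * a + v * b \<le> R"
proof -
  have "u * a + v * b \<le> u * R + v * R" using assms by (intro add_mono mult_left_mono) auto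
  also have "\<dots> = (u + v) * R" by (simp add: distrib_right)
  also have "\<dots> = R" using assms by simp
  finally show ?thesis .
qed

lemma ball_convex:
  "convex {x. cd_abs m x < R1 \<and> cd_abs m x < R2 \<and> cd_abs m x \<le> R3}"
proof (rule convexI)
  fix x y :: "nat \<Rightarrow> real" and u v :: real
  assume x: "x \<in> {x. cd_abs m x < R1 \<and> cd_abs m x < R2 \<and> cd_abs m x \<le> R3}"
    and y: "y \<in> {x. cd_abs m x < R1 \<and> cd_abs m x < R2 \<and> cd_abs m x \<le> R3}"
    and uv: "0 \<le> u" "0 \<le> v" "u + v = 1"
  have t: "cd_abs m (u *\<^sub>R x + v *\<^sub>R y) \<le> u * cd_abs m x + v * cd_abs m y"
    using uv(1,2) by (rule abs_convex)
  have "u * cd_abs m x + v * cd_abs m y < R1" using x y uv by (intro conv_lt) auto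
  moreover have "u * cd_abs m x + v * cd_abs m y < R2" using x y uv by (intro conv_lt) auto
  moreover have "u * cd_abs m x + v * cd_abs m y \<le> R3" using x y uv by (intro conv_le) auto
  ultimately show "u *\<^sub>R x + v *\<^sub>R y \<in> {x. cd_abs m x < R1 \<and> cd_abs m x < R2 \<and> cd_abs m x \<le> R3}"
    using t by auto
qed

context unitI
begin

lemma CI_phi: "s \<in> cd_CI I \<Longrightarrow> \<exists>z. s = phi I z"
  by (auto simp: cd_CI_def phi_def intro: exI[of _ "Complex u v" for u v])

lemma fI_phi:
  "cd_fI m a n I (phi I z) =
     phi I (\<Sum>k\<le>n. Complex (cd_inner m (a k) cd_one) (cd_inner m (a k) I) * z^k)"
  by (simp add: cd_fI_def proj_phi pow_phi phi_mult phi_sum)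

end

theorem lemma4p9:
  fixes m n :: nat and a :: "nat \<Rightarrow> nat \<Rightarrow> real"
  assumes "n \<ge> 1"
    and "\<And>k. k < n \<Longrightarrow> a k \<in> cd_space m"
    and "a n = cd_one"
    and "r \<in> cd_snail m a n"
  shows "cd_abs m r < sqrt (1 + (\<Sum>k<n. (cd_abs m (a k))\<^sup>2)) \<and>
         cd_abs m r < 1 + Max ((\<lambda>k. cd_abs m (a k)) ` {..<n}) \<and>
         cd_abs m r \<le> max 1 (\<Sum>k<n. cd_abs m (a k))"
proof -
  obtain I where uI: "cd_unit m I" and rK: "r \<in> cd_K m a n I"
    using assms(4) by (auto simp: cd_snail_def)
  interpret unitI m I by standard (rule uI)
  define c where "c k = Complex (cd_inner m (a k) cd_one) (cd_inner m (a k) I)" for k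
  define B where "B = {x. cd_abs m x < sqrt (1 + (\<Sum>k<n. (cd_abs m (a k))\<^sup>2)) \<and>
         cd_abs m x < 1 + Max ((\<lambda>k. cd_abs m (a k)) ` {..<n}) \<and>
         cd_abs m x \<le> max 1 (\<Sum>k<n. cd_abs m (a k))}"
  have pn: "cd_proj m I (a n) \<noteq> 0"
  proof
    assume "cd_proj m I (a n) = 0"
    then have "cd_one = 0" using proj_one assms(3) by simp
    then have "cd_one 0 = (0::nat\<Rightarrow>real) 0" by simp
    then show False by simp
  qed
  have "\<exists>k\<in>{1..n}. cd_proj m I (a k) \<noteq> 0" using pn assms(1) by auto
  then have rH: "r \<in> convex hull {s \<in> cd_CI I. cd_fI m a n I s = 0}"
    using rK by (simp add: cd_K_def)
  have cn: "c n = 1"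
  proof -
    have "phi I (c n) = phi I 1" using proj_one assms(3) by (simp add: c_def proj_phi[symmetric] phi_one)
    moreover have "phi I (c n - 1) = phi I (c n) - phi I 1" by (simp add: phi_def scaleR_diff_left algebra_simps)
    ultimately have "phi I (c n - 1) = 0" by simp
    then have "c n - 1 = 0" by (rule phi_inj)
    then show ?thesis by simp
  qed
  have roots: "{s \<in> cd_CI I. cd_fI m a n I s = 0} \<subseteq> B"
  proof
    fix s assume s: "s \<in> {s \<in> cd_CI I. cd_fI m a n I s = 0}"
    then obtain z where z: "s = phi I z" using CI_phi by auto
    have "phi I (\<Sum>k\<le>n. c k * z^k) = 0" using s z fI_phi by (simp add: c_def)
    then have P: "(\<Sum>k\<le>n. c k * z^k) = 0" by (rule phi_inj)
    have "(\<Sum>k\<le>n. c k * z^k) = (\<Sum>k<n. c k * z^k) + z^n"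
      using cn by (simp add: lessThan_Suc_atMost[symmetric])
    with P have zn: "z^n = - (\<Sum>k<n. c k * z^k)" by (simp add: eq_neg_iff_add_eq_0 add.commute)
    have "cmod z ^ n = cmod (\<Sum>k<n. c k * z^k)" by (simp add: zn norm_power[symmetric])
    also have "\<dots> \<le> (\<Sum>k<n. cmod (c k) * cmod z ^ k)"
      by (rule order.trans[OF norm_sum]) (simp add: norm_mult norm_power)
    also have "\<dots> \<le> (\<Sum>k<n. cd_abs m (a k) * cmod z ^ k)"
      by (intro sum_mono mult_right_mono) (simp_all add: c_def bessel)
    finally have h: "cmod z ^ n \<le> (\<Sum>k<n. cd_abs m (a k) * cmod z ^ k)" .
    have "cmod z < sqrt (1 + (\<Sum>k<n. (cd_abs m (a k))\<^sup>2)) \<and>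
         cmod z < 1 + Max ((\<lambda>k. cd_abs m (a k)) ` {..<n}) \<and>
         cmod z \<le> max 1 (\<Sum>k<n. cd_abs m (a k))"
      using root_bounds[of n "cmod z" "\<lambda>k. cd_abs m (a k)"] assms(1) h abs_nonneg by auto
    then show "s \<in> B" unfolding B_def by (simp add: z abs_phi)
  qed
  have "convex hull {s \<in> cd_CI I. cd_fI m a n I s = 0} \<subseteq> B"
    by (rule hull_minimal[OF roots]) (unfold B_def, rule ball_convex)
  with rH have "r \<in> B" by blast
  then show ?thesis unfolding B_def by simp
qed

end
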